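(* Let $k,\delta,p$ be positive integers with $p<\delta$, and let $\epsilon>0$ be a real number such that $$\gamma_e:=(1-\epsilon)\frac{\binom{\delta}{p}}{\binom{\delta-p+e}{e}}>1\qquad\text{for all } e\in\{0,1,\dots,p-1\}.$$ Define $\gamma_p:=1$, $A:=\lceil\binom{\delta}{p}/\epsilon\rceil$, and for integers $k,t$ $$\mathcal S_{(k,t,p)}:=\Big\{(k_0,\dots,k_p)\in\mathbb N_0^{p+1}:\ \sum_{i=0}^p k_i=k,\ \sum_{i=0}^p i\,k_i\le t+p\Big\}.$$ Then for all non-negative integers $t$ and $k$ with $\delta k\ge t$, $$M(A+\delta k,t)\ \ge\ \Big\lfloor A\min_{(k_0,\dots,k_p)\in\mathcal S_{(k,t,p)}}\prod_{e=0}^p\gamma_e^{k_e}\Big\rfloor,$$ and in particular $$M(A+\delta k,t)\ \ge\ A\,\frac{(1-\epsilon)^k\binom{\delta}{p}^k}{\binom{\delta k-pk+t+p}{t+p}}-1.$$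
   Context: Binary Z-channel with noiseless feedback: an input $0$ is always received as $0$; an input $1$ is received as $1$ or (an error) as $0$. A feedback encoding strategy of blocklength $n$ for a finite message set $\mathcal M$ consists of functions $c_i:\mathcal M\times\{0,1\}^{i-1}\to\{0,1\}$, $i=1,\dots,n$; when sending $m$, the $i$-th transmitted symbol is $c_i(m,y^{i-1})$, with $y^{i-1}$ the previously received symbols. Let $c(m,y^{n-1})=(c_1(m),\dots,c_n(m,y^{n-1}))$ and $\mathcal Y^n_t(m)=\{y^n\in\{0,1\}^n:y_i\le c_i(m,y^{i-1})\ \forall i,\ d_H(y^n,c(m,y^{n-1}))\le t\}$ ($d_H$ Hamming distance). The strategy is successful if the sets $\mathcal Y^n_t(m)$, $m\in\mathcal M$, are pairwise disjoint. $M(n,t)$ denotes the maximum $|\mathcal M|$ admitting a successful strategy of blocklength $n$ with at most $t$ errors. $\mathbb N_0$ denotes the non-negative integers. *)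

theory Defs
  imports Complex_Main
begin

text \<open>Binary symbols are modelled as bool (False = 0, True = 1), so the
  componentwise order y_i \<le> c_i is the order on bool.
  A feedback encoding strategy is a function enc m ys giving the next
  transmitted symbol for message m after the received prefix ys;
  c_i(m, y^{i-1}) = enc m (take (i-1) y).\<close>

definition codeword :: "('m \<Rightarrow> bool list \<Rightarrow> bool) \<Rightarrow> nat \<Rightarrow> 'm \<Rightarrow> bool list \<Rightarrow> bool list" where
  "codeword enc n m y = map (\<lambda>i. enc m (take i y)) [0..<n]"

definition hamming :: "bool list \<Rightarrow> bool list \<Rightarrow> nat" where
  "hamming x y = card {i. i < length x \<and> i < length y \<and> x ! i \<noteq> y ! i}"

definition Yset :: "('m \<Rightarrow> bool list \<Rightarrow> bool) \<Rightarrow> nat \<Rightarrow> nat \<Rightarrow> 'm \<Rightarrow> bool list set" where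
  "Yset enc n t m = {y. length y = n \<and> (\<forall>i<n. y ! i \<le> enc m (take i y))
                         \<and> hamming y (codeword enc n m y) \<le> t}"

definition successful :: "('m \<Rightarrow> bool list \<Rightarrow> bool) \<Rightarrow> 'm set \<Rightarrow> nat \<Rightarrow> nat \<Rightarrow> bool" where
  "successful enc Ms n t \<longleftrightarrow>
     (\<forall>m\<in>Ms. \<forall>m'\<in>Ms. m \<noteq> m' \<longrightarrow> Yset enc n t m \<inter> Yset enc n t m' = {})"

text \<open>M(n,t): maximal size of a finite message set (w.l.o.g. {0..<N}) admitting a
  successful strategy.\<close>
definition Mmax :: "nat \<Rightarrow> nat \<Rightarrow> nat" where
  "Mmax n t = Max {N. \<exists>enc :: nat \<Rightarrow> bool list \<Rightarrow> bool. successful enc {..<N} n t}"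

definition Sset :: "nat \<Rightarrow> nat \<Rightarrow> nat \<Rightarrow> nat list set" where
  "Sset k t p = {ks. length ks = p + 1 \<and> sum_list ks = k
                     \<and> (\<Sum>i\<le>p. i * ks ! i) \<le> t + p}"

end

theory Submission
  imports Defs
begin

fun outp :: "('m \<Rightarrow> bool list \<Rightarrow> bool) \<Rightarrow> 'm \<Rightarrow> nat \<Rightarrow> bool list" where
  "outp e m 0 = []"
| "outp e m (Suc i) = outp e m i @ [e m (outp e m i)]"

lemma outp_len[simp]: "length (outp e m i) = i"
  by (induction i) auto

lemma outp_take: "j \<le> i \<Longrightarrow> take j (outp e m i) = outp e m j"
proof (induction i)
  case 0 then show ?case by simp
next
  case (Suc i)
  show ?case
  proof (cases "j = Suc i")
    case True then show ?thesis by simp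
  next
    case False
    then have "j \<le> i" using Suc.prems by simp
    then show ?thesis using Suc.IH by simp
  qed
qed

lemma outp_nth: "i < n \<Longrightarrow> outp e m n ! i = e m (outp e m i)"
proof (induction n)
  case 0 then show ?case by simp
next
  case (Suc n)
  then show ?case by (cases "i = n") (auto simp: nth_append)
qed

lemma hamming_self[simp]: "hamming x x = 0"
  by (simp add: hamming_def)

lemma outp_in_Yset: "outp e m n \<in> Yset e n t m"
proof -
  have cw: "codeword e n m (outp e m n) = outp e m n"
    by (rule nth_equalityI) (auto simp: codeword_def outp_take outp_nth)
  show ?thesis
    unfolding Yset_def using cw by (auto simp: outp_take outp_nth)
qed

lemma successful_card_le:
  fixes N :: nat
  assumes "successful e {..<N} n t"
  shows "N \<le> 2 ^ n"
proof -
  have inj: "inj_on (\<lambda>m. outp e m n) {..<N}"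
  proof (rule inj_onI)
    fix m m' assume m: "m \<in> {..<N}" "m' \<in> {..<N}" and eq: "outp e m n = outp e m' n"
    show "m = m'"
    proof (rule ccontr)
      assume "m \<noteq> m'"
      then have "Yset e n t m \<inter> Yset e n t m' = {}" using assms m by (auto simp: successful_def)
      moreover have "outp e m n \<in> Yset e n t m \<inter> Yset e n t m'"
        using outp_in_Yset[of e m n t] outp_in_Yset[of e m' n t] eq by auto
      ultimately show False by auto
    qed
  qed
  have sub: "(\<lambda>m. outp e m n) ` {..<N} \<subseteq> {xs. set xs \<subseteq> (UNIV::bool set) \<and> length xs = n}"
    by auto
  have "N = card ((\<lambda>m. outp e m n) ` {..<N})" using inj by (simp add: card_image)
  also have "\<dots> \<le> card {xs. set xs \<subseteq> (UNIV::bool set) \<and> length xs = n}"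
    by (rule card_mono[OF _ sub]) (rule finite_lists_length_eq, simp)
  also have "\<dots> = 2 ^ n" using card_lists_length_eq[of "UNIV::bool set" n] by simp
  finally show ?thesis .
qed

lemma successful_empty: "successful e {} n t"
  by (simp add: successful_def)

lemma successful_mono: "successful e Ms n t \<Longrightarrow> Ms' \<subseteq> Ms \<Longrightarrow> successful e Ms' n t"
  by (auto simp: successful_def)

lemma Yset_relabel: "Yset (\<lambda>m ys. e (f m) ys) n t m = Yset e n t (f m)"
  by (simp add: Yset_def codeword_def)

lemma successful_relabel:
  assumes "successful e Ms n t" "inj_on f R" "f ` R \<subseteq> Ms"
  shows "successful (\<lambda>m ys. e (f m) ys) R n t"
  using assms unfolding successful_def Yset_relabel
  by (metis image_subset_iff inj_on_def)

lemma Mmax_props: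
  shows "\<exists>e. successful e {..<Mmax n t} n t"
    and "successful e {..<N} n t \<Longrightarrow> N \<le> Mmax n t"
proof -
  let ?S = "{N. \<exists>enc :: nat \<Rightarrow> bool list \<Rightarrow> bool. successful enc {..<N} n t}"
  have fin: "finite ?S"
    by (rule finite_subset[of _ "{..2^n}"]) (auto dest: successful_card_le)
  have ne: "0 \<in> ?S" using successful_empty by auto
  have "Mmax n t \<in> ?S" unfolding Mmax_def using fin ne by (intro Max_in) blast+
  then show "\<exists>e. successful e {..<Mmax n t} n t" by auto
  show "successful e {..<N} n t \<Longrightarrow> N \<le> Mmax n t"
    unfolding Mmax_def using fin by (intro Max_ge) auto
qed

lemma Mmax_ge:
  fixes e :: "'a \<Rightarrow> bool list \<Rightarrow> bool"
  assumes "successful e R n t" "finite R"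
  shows "card R \<le> Mmax n t"
proof -
  obtain h where h: "bij_betw h {0..<card R} R" using ex_bij_betw_nat_finite[OF assms(2)] by blast
  have "successful (\<lambda>m ys. e (h m) ys) {..<card R} n t"
    using successful_relabel[OF assms(1), of h "{..<card R}"] h
    by (auto simp: bij_betw_def atLeast0LessThan)
  then show ?thesis by (rule Mmax_props(2))
qed

lemma Mmax_get:
  fixes R :: "'a set"
  assumes "finite R" "card R \<le> Mmax n t"
  shows "\<exists>e. successful e R n t"
proof -
  obtain e where e: "successful e {..<Mmax n t} n t" using Mmax_props(1) by blast
  obtain h where h: "bij_betw h {0..<card R} R" using ex_bij_betw_nat_finite[OF assms(1)] by blast
  let ?f = "inv_into {0..<card R} h"
  have bf: "bij_betw ?f R {0..<card R}" using h by (rule bij_betw_inv_into)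
  have "?f ` R \<subseteq> {..<Mmax n t}" using bf assms(2) by (auto simp: bij_betw_def)
  moreover have "inj_on ?f R" using bf by (auto simp: bij_betw_def)
  ultimately show ?thesis using successful_relabel[OF e] by blast
qed

definition encs :: "nat \<Rightarrow> bool list \<Rightarrow> bool" where
  "encs i ys = (length (filter id ys) < i)"

lemma ones_take_le: "length (filter id (take i y)) \<le> length (filter id y)"
proof -
  have "y = take i y @ drop i y" by simp
  then have "length (filter id y) = length (filter id (take i y)) + length (filter id (drop i y))"
    by (metis filter_append length_append)
  then show ?thesis by simp
qed

lemma encs_Yset:
  assumes y: "y \<in> Yset encs n t m" and mle: "m + t \<le> n"
  shows "length (filter id y) = m"
proof -
  have len: "length y = n" and le: "\<And>i. i < n \<Longrightarrow> y ! i \<le> encs m (take i y)"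
    and ham: "hamming y (codeword encs n m y) \<le> t"
    using y by (auto simp: Yset_def)
  have a: "i \<le> n \<Longrightarrow> length (filter id (take i y)) \<le> m" for i
  proof (induction i)
    case 0 then show ?case by simp
  next
    case (Suc i)
    then have i: "i < length y" using len by simp
    have tk: "take (Suc i) y = take i y @ [y ! i]" using i by (simp add: take_Suc_conv_app_nth)
    show ?case
    proof (cases "length (filter id (take i y)) < m")
      case True then show ?thesis using tk by (auto simp: id_def)
    next
      case False
      then have eq: "length (filter id (take i y)) = m" using Suc by (simp add: id_def)
      then have "\<not> encs m (take i y)" by (simp add: encs_def)
      then have "\<not> y ! i" using le[of i] i len by auto
      then show ?thesis using tk eq by (auto simp: id_def)
    qed
  qed
  have ub: "length (filter id y) \<le> m" using a[of n] len by simp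
  show ?thesis
  proof (rule ccontr)
    assume "length (filter id y) \<noteq> m"
    then have lt: "length (filter id y) < m" using ub by simp
    have cw: "codeword encs n m y = replicate n True"
      unfolding codeword_def
      by (rule nth_equalityI) (auto simp: encs_def intro: le_less_trans[OF ones_take_le lt])
    have "hamming y (codeword encs n m y) = card {i. i < length y \<and> \<not> y ! i}"
      unfolding cw hamming_def using len by (intro arg_cong[where f=card]) auto
    also have "\<dots> = length (filter Not y)" by (simp add: length_filter_conv_card)
    also have "\<dots> = n - length (filter id y)"
      using sum_length_filter_compl[of id y] len by simp
    finally have "n - length (filter id y) \<le> t" using ham by simp
    then show False using lt mle by simp
  qed
qed

lemma Mmax_simple:
  assumes "t \<le> n"
  shows "n - t + 1 \<le> Mmax n t"
proof -
  have "successful encs {..<n - t + 1} n t"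
    unfolding successful_def
  proof (intro ballI impI)
    fix m m' assume "m \<in> {..<n - t + 1}" "m' \<in> {..<n - t + 1}" "m \<noteq> m'"
    then show "Yset encs n t m \<inter> Yset encs n t m' = {}"
      using encs_Yset[of _ n t m] encs_Yset[of _ n t m'] assms by force
  qed
  then show ?thesis by (rule Mmax_props(2))
qed

definition comb :: "nat \<Rightarrow> ('m \<Rightarrow> bool list \<Rightarrow> bool) \<Rightarrow> (bool list \<Rightarrow> 'm \<Rightarrow> bool list \<Rightarrow> bool)
    \<Rightarrow> 'm \<Rightarrow> bool list \<Rightarrow> bool" where
  "comb n1 e1 e2 m ys = (if length ys < n1 then e1 m ys else e2 (take n1 ys) m (drop n1 ys))"

lemma hamming_zip: "hamming x y = length (filter (\<lambda>(a,b). a \<noteq> b) (zip x y))"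
  unfolding hamming_def length_filter_conv_card
  by (intro arg_cong[where f=card]) auto

lemma hamming_append:
  "length a = length c \<Longrightarrow> hamming (a @ b) (c @ d) = hamming a c + hamming b d"
  by (simp add: hamming_zip zip_append)

lemma codeword_len[simp]: "length (codeword e n m y) = n"
  by (simp add: codeword_def)

lemma codeword_comb:
  assumes "length y = n1 + n2"
  shows "codeword (comb n1 e1 e2) (n1 + n2) m y
       = codeword e1 n1 m (take n1 y) @ codeword (e2 (take n1 y)) n2 m (drop n1 y)"
proof (rule nth_equalityI)
  show "length (codeword (comb n1 e1 e2) (n1 + n2) m y) =
    length (codeword e1 n1 m (take n1 y) @ codeword (e2 (take n1 y)) n2 m (drop n1 y))" by simp
next
  fix i assume "i < length (codeword (comb n1 e1 e2) (n1 + n2) m y)"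
  then have i: "i < n1 + n2" by simp
  show "codeword (comb n1 e1 e2) (n1 + n2) m y ! i =
    (codeword e1 n1 m (take n1 y) @ codeword (e2 (take n1 y)) n2 m (drop n1 y)) ! i"
  proof (cases "i < n1")
    case True
    then show ?thesis using i assms
      by (simp add: codeword_def comb_def nth_append min_def)
  next
    case False
    then have "take n1 (take i y) = take n1 y" "drop n1 (take i y) = take (i - n1) (drop n1 y)"
      by (simp_all add: min_def drop_take)
    then show ?thesis using i assms False
      by (simp add: codeword_def comb_def nth_append min_def)
  qed
qed

lemma Yset_comb:
  assumes y: "y \<in> Yset (comb n1 e1 e2) (n1 + n2) t m"
  shows "length (take n1 y) = n1"
    and "\<forall>i<n1. take n1 y ! i \<le> e1 m (take i (take n1 y))"
    and "hamming (take n1 y) (codeword e1 n1 m (take n1 y)) \<le> t"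
    and "drop n1 y \<in> Yset (e2 (take n1 y)) n2 (t - hamming (take n1 y) (codeword e1 n1 m (take n1 y))) m"
proof -
  have len: "length y = n1 + n2" and le: "\<And>i. i < n1 + n2 \<Longrightarrow> y ! i \<le> comb n1 e1 e2 m (take i y)"
    and ham: "hamming y (codeword (comb n1 e1 e2) (n1 + n2) m y) \<le> t"
    using y by (auto simp: Yset_def)
  show "length (take n1 y) = n1" using len by simp
  show "\<forall>i<n1. take n1 y ! i \<le> e1 m (take i (take n1 y))"
  proof (intro allI impI)
    fix i assume "i < n1"
    then show "take n1 y ! i \<le> e1 m (take i (take n1 y))"
      using le[of i] len by (simp add: comb_def min_def)
  qed
  have split: "hamming y (codeword (comb n1 e1 e2) (n1 + n2) m y)
     = hamming (take n1 y) (codeword e1 n1 m (take n1 y))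
       + hamming (drop n1 y) (codeword (e2 (take n1 y)) n2 m (drop n1 y))"
    using hamming_append[of "take n1 y" "codeword e1 n1 m (take n1 y)" "drop n1 y"] len
    by (simp add: codeword_comb)
  show "hamming (take n1 y) (codeword e1 n1 m (take n1 y)) \<le> t" using split ham by simp
  show "drop n1 y \<in> Yset (e2 (take n1 y)) n2 (t - hamming (take n1 y) (codeword e1 n1 m (take n1 y))) m"
    unfolding Yset_def
  proof (intro CollectI conjI allI impI)
    show "length (drop n1 y) = n2" using len by simp
    fix i assume i: "i < n2"
    have "y ! (n1 + i) \<le> comb n1 e1 e2 m (take (n1 + i) y)" using le[of "n1 + i"] i by simp
    moreover have "comb n1 e1 e2 m (take (n1 + i) y) = e2 (take n1 y) m (take i (drop n1 y))"
      using len i by (simp add: comb_def min_def drop_take)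
    ultimately show "drop n1 y ! i \<le> e2 (take n1 y) m (take i (drop n1 y))"
      using len by simp
  next
    show "hamming (drop n1 y) (codeword (e2 (take n1 y)) n2 m (drop n1 y))
      \<le> t - hamming (take n1 y) (codeword e1 n1 m (take n1 y))" using split ham by simp
  qed
qed

lemma compose:
  assumes h: "\<And>y1 m. length y1 = n1 \<Longrightarrow> m \<in> Ms \<Longrightarrow> (\<forall>i<n1. y1 ! i \<le> e1 m (take i y1))
               \<Longrightarrow> hamming y1 (codeword e1 n1 m y1) = h y1"
    and s: "\<And>y1. length y1 = n1 \<Longrightarrow>
      successful (e2 y1) {m\<in>Ms. (\<forall>i<n1. y1 ! i \<le> e1 m (take i y1)) \<and> h y1 \<le> t} n2 (t - h y1)"
  shows "successful (comb n1 e1 e2) Ms (n1 + n2) t"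
  unfolding successful_def
proof (intro ballI impI)
  fix m m' assume m: "m \<in> Ms" "m' \<in> Ms" "m \<noteq> m'"
  show "Yset (comb n1 e1 e2) (n1 + n2) t m \<inter> Yset (comb n1 e1 e2) (n1 + n2) t m' = {}"
  proof (rule ccontr)
    assume "Yset (comb n1 e1 e2) (n1 + n2) t m \<inter> Yset (comb n1 e1 e2) (n1 + n2) t m' \<noteq> {}"
    then obtain y where y1: "y \<in> Yset (comb n1 e1 e2) (n1 + n2) t m"
      and y2: "y \<in> Yset (comb n1 e1 e2) (n1 + n2) t m'" by blast
    let ?y1 = "take n1 y"
    note A = Yset_comb[OF y1] and B = Yset_comb[OF y2]
    have hm: "hamming ?y1 (codeword e1 n1 m ?y1) = h ?y1" using h[OF A(1) m(1) A(2)] .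
    have hm': "hamming ?y1 (codeword e1 n1 m' ?y1) = h ?y1" using h[OF A(1) m(2) B(2)] .
    let ?R = "{m\<in>Ms. (\<forall>i<n1. ?y1 ! i \<le> e1 m (take i ?y1)) \<and> h ?y1 \<le> t}"
    have "m \<in> ?R" "m' \<in> ?R" using A B m hm hm' by auto
    then have "Yset (e2 ?y1) n2 (t - h ?y1) m \<inter> Yset (e2 ?y1) n2 (t - h ?y1) m' = {}"
      using s[OF A(1)] m(3) by (auto simp: successful_def)
    moreover have "drop n1 y \<in> Yset (e2 ?y1) n2 (t - h ?y1) m" using A(4) hm by simp
    moreover have "drop n1 y \<in> Yset (e2 ?y1) n2 (t - h ?y1) m'" using B(4) hm' by simp
    ultimately show False by blast
  qed
qed

lemma card_mod_class:
  assumes "(C::nat) > 0"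
  shows "card {m. m < N \<and> m mod C = j} \<le> N div C + 1"
proof -
  let ?S = "{m. m < N \<and> m mod C = j}"
  have inj: "inj_on (\<lambda>m. m div C) ?S"
  proof (rule inj_onI)
    fix x y assume "x \<in> ?S" "y \<in> ?S" "x div C = y div C"
    then have "x div C = y div C" "x mod C = y mod C" by auto
    then show "x = y" using div_mult_mod_eq[of x C] div_mult_mod_eq[of y C] by metis
  qed
  have sub: "(\<lambda>m. m div C) ` ?S \<subseteq> {..N div C}"
  proof
    fix x assume "x \<in> (\<lambda>m. m div C) ` ?S"
    then obtain m where "m < N" "x = m div C" by auto
    then show "x \<in> {..N div C}" using div_le_mono[of m N C] by simp
  qed
  have "card ?S = card ((\<lambda>m. m div C) ` ?S)" using inj by (simp add: card_image)
  also have "\<dots> \<le> card {..N div C}" by (rule card_mono[OF _ sub]) simp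
  finally show ?thesis by simp
qed

lemma card_supersets:
  assumes "finite A" "Y \<subseteq> A"
  shows "card {K. K \<subseteq> A \<and> card K = p \<and> Y \<subseteq> K} \<le> (card A - card Y) choose (p - card Y)"
proof -
  have fY: "finite Y" using assms finite_subset by blast
  have inj: "inj_on (\<lambda>K. K - Y) {K. K \<subseteq> A \<and> card K = p \<and> Y \<subseteq> K}"
  proof (rule inj_onI)
    fix K K' assume K: "K \<in> {K. K \<subseteq> A \<and> card K = p \<and> Y \<subseteq> K}" "K' \<in> {K. K \<subseteq> A \<and> card K = p \<and> Y \<subseteq> K}"
      and eq: "K - Y = K' - Y"
    have "K = Y \<union> (K - Y)" "K' = Y \<union> (K' - Y)" using K by auto
    then show "K = K'" using eq by simp
  qed
  have sub: "(\<lambda>K. K - Y) ` {K. K \<subseteq> A \<and> card K = p \<and> Y \<subseteq> K} \<subseteq> {L. L \<subseteq> A - Y \<and> card L = p - card Y}"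
    using fY by (auto simp: card_Diff_subset)
  have "card {K. K \<subseteq> A \<and> card K = p \<and> Y \<subseteq> K}
      = card ((\<lambda>K. K - Y) ` {K. K \<subseteq> A \<and> card K = p \<and> Y \<subseteq> K})" using inj by (simp add: card_image)
  also have "\<dots> \<le> card {L. L \<subseteq> A - Y \<and> card L = p - card Y}"
    by (rule card_mono[OF _ sub]) (use assms in auto)
  also have "\<dots> = card (A - Y) choose (p - card Y)" using assms by (intro n_subsets) auto
  also have "card (A - Y) = card A - card Y" using assms fY by (simp add: card_Diff_subset)
  finally show ?thesis .
qed

lemma block:
  fixes \<delta> p N n t :: nat
  assumes pd: "p \<le> \<delta>"
    and hyp: "\<And>e. e \<le> p \<Longrightarrow> e \<le> t \<Longrightarrow>
       min N (((\<delta> - p + e) choose e) * (N div (\<delta> choose p) + 1)) \<le> Mmax n (t - e)"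
  shows "N \<le> Mmax (\<delta> + n) t"
proof -
  define C where "C = \<delta> choose p"
  define W where "W = {K. K \<subseteq> {..<\<delta>} \<and> card K = p}"
  have finW: "finite W" unfolding W_def by auto
  have cW: "card W = C" unfolding W_def C_def using n_subsets[of "{..<\<delta>}" p] by simp
  have Cpos: "C > 0" unfolding C_def using pd by simp
  obtain g where g: "bij_betw g {0..<C} W" using ex_bij_betw_nat_finite[OF finW] cW by metis
  define Km where "Km m = g (m mod C)" for m
  have KmW: "Km m \<in> W" for m using g Cpos unfolding Km_def bij_betw_def by auto
  define e1 where "e1 m ys = (length ys \<in> Km m)" for m and ys :: "bool list"
  define Yof where "Yof y1 = {i. i < \<delta> \<and> y1 ! i}" for y1 :: "bool list"
  define h where "h y1 = p - card (Yof y1)" for y1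
  define R where "R y1 = {m\<in>{..<N}. (\<forall>i<\<delta>. y1 ! i \<le> e1 m (take i y1)) \<and> h y1 \<le> t}" for y1
  have cons: "(\<forall>i<\<delta>. y1 ! i \<le> e1 m (take i y1)) \<longleftrightarrow> Yof y1 \<subseteq> Km m" if "length y1 = \<delta>" for y1 m
    using that by (auto simp: e1_def Yof_def min_def)
  have hh: "hamming y1 (codeword e1 \<delta> m y1) = h y1"
    if len: "length y1 = \<delta>" and c: "\<forall>i<\<delta>. y1 ! i \<le> e1 m (take i y1)" for y1 m
  proof -
    have YK: "Yof y1 \<subseteq> Km m" using cons[OF len] c by simp
    have KmD: "Km m \<subseteq> {..<\<delta>}" "card (Km m) = p" using KmW[of m] by (auto simp: W_def)
    have "{i. i < length y1 \<and> i < length (codeword e1 \<delta> m y1) \<and> y1 ! i \<noteq> codeword e1 \<delta> m y1 ! i}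
        = Km m - Yof y1"
      using len KmD(1) YK by (auto simp: codeword_def e1_def Yof_def min_def)
    then have "hamming y1 (codeword e1 \<delta> m y1) = card (Km m - Yof y1)" by (simp add: hamming_def)
    also have "\<dots> = p - card (Yof y1)"
    proof -
      have "finite (Km m)" using KmD(1) finite_subset by blast
      then have "finite (Yof y1)" using YK finite_subset by blast
      then show ?thesis using YK KmD(2) by (simp add: card_Diff_subset)
    qed
    finally show ?thesis by (simp add: h_def)
  qed
  have cardR: "card (R y1) \<le> Mmax n (t - h y1)" if len: "length y1 = \<delta>" for y1
  proof (cases "R y1 = {}")
    case True then show ?thesis by simp
  next
    case False
    then obtain m0 where m0: "m0 \<in> R y1" by blast
    let ?Y = "Yof y1"
    have Y0: "?Y \<subseteq> Km m0" "h y1 \<le> t" using m0 cons[OF len] by (auto simp: R_def)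
    have Kd: "Km m0 \<subseteq> {..<\<delta>}" "card (Km m0) = p" using KmW[of m0] by (auto simp: W_def)
    have cY: "card ?Y \<le> p" using Y0(1) Kd by (metis card_mono finite_lessThan finite_subset)
    define e where "e = h y1"
    have ep: "e \<le> p" "e \<le> t" using Y0 by (auto simp: e_def h_def)
    have cYe: "card ?Y = p - e" using cY by (simp add: e_def h_def)
    have Ysub: "?Y \<subseteq> {..<\<delta>}" by (auto simp: Yof_def)
    define J where "J = {j\<in>{0..<C}. ?Y \<subseteq> g j}"
    have RJ: "R y1 \<subseteq> (\<Union>j\<in>J. {m. m < N \<and> m mod C = j})"
      using cons[OF len] Cpos by (auto simp: R_def J_def Km_def)
    have cJ: "card J \<le> (\<delta> - p + e) choose e"
    proof -
      have "inj_on g J" using g by (auto simp: J_def bij_betw_def intro: inj_on_subset)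
      then have "card J = card (g ` J)" by (simp add: card_image)
      also have "\<dots> \<le> card {K. K \<subseteq> {..<\<delta>} \<and> card K = p \<and> ?Y \<subseteq> K}"
        using g by (intro card_mono) (auto simp: J_def bij_betw_def W_def)
      also have "\<dots> \<le> (\<delta> - card ?Y) choose (p - card ?Y)"
        using card_supersets[of "{..<\<delta>}" ?Y p] Ysub by simp
      also have "\<delta> - card ?Y = \<delta> - p + e" using cYe ep pd by simp
      also have "p - card ?Y = e" using cYe ep by simp
      finally show ?thesis .
    qed
    have "card (R y1) \<le> card (\<Union>j\<in>J. {m. m < N \<and> m mod C = j})"
      by (rule card_mono[OF _ RJ]) (rule finite_subset[of _ "{..<N}"], auto)
    also have "\<dots> \<le> (\<Sum>j\<in>J. card {m. m < N \<and> m mod C = j})"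
      by (rule card_UN_le) (auto simp: J_def)
    also have "\<dots> \<le> (\<Sum>j\<in>J. N div C + 1)"
      by (rule sum_mono) (rule card_mod_class[OF Cpos])
    also have "\<dots> = card J * (N div C + 1)" by simp
    also have "\<dots> \<le> ((\<delta> - p + e) choose e) * (N div C + 1)" using cJ by (rule mult_right_mono) simp
    finally have c1: "card (R y1) \<le> ((\<delta> - p + e) choose e) * (N div C + 1)" .
    have c2: "card (R y1) \<le> N" by (rule order_trans[OF card_mono[of "{..<N}"]]) (auto simp: R_def)
    have "card (R y1) \<le> min N (((\<delta> - p + e) choose e) * (N div C + 1))" using c1 c2 by simp
    also have "\<dots> \<le> Mmax n (t - e)" using hyp[OF ep] by (simp add: C_def)
    finally show ?thesis by (simp add: e_def)
  qed
  define e2 where "e2 y1 = (SOME e. successful e (R y1) n (t - h y1))" for y1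
  have s2: "successful (e2 y1) (R y1) n (t - h y1)" if "length y1 = \<delta>" for y1
  proof -
    have "finite (R y1)" by (auto simp: R_def)
    then have "\<exists>e. successful e (R y1) n (t - h y1)" using Mmax_get cardR[OF that] by blast
    then show ?thesis unfolding e2_def by (rule someI_ex)
  qed
  have "successful (comb \<delta> e1 e2) {..<N} (\<delta> + n) t"
    by (rule compose[where h=h]) (use hh s2 in \<open>auto simp: R_def\<close>)
  then show ?thesis by (rule Mmax_props(2))
qed

definition mu :: "(nat \<Rightarrow> real) \<Rightarrow> nat \<Rightarrow> nat \<Rightarrow> nat \<Rightarrow> real" where
  "mu \<gamma> p k t = Min ((\<lambda>ks. \<Prod>e\<le>p. \<gamma> e ^ (ks ! e)) ` Sset k t p)"

lemma Sset_finite: "finite (Sset k t p)"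
proof (rule finite_subset)
  show "Sset k t p \<subseteq> {ks. set ks \<subseteq> {..k} \<and> length ks = p + 1}"
    by (auto simp: Sset_def dest: member_le_sum_list)
  show "finite {ks. set ks \<subseteq> {..k} \<and> length ks = p + 1}"
    by (rule finite_lists_length_eq) simp
qed

lemma Sset_ne: "k # replicate p 0 \<in> Sset k t p"
proof -
  have z: "(\<Sum>i\<le>p. i * (k # replicate p 0) ! i) = 0"
    by (rule sum.neutral) (auto simp: nth_Cons split: nat.splits)
  show ?thesis unfolding Sset_def mem_Collect_eq z by simp
qed

lemma Sset_top:
  assumes "p * k \<le> t + p"
  shows "replicate p 0 @ [k] \<in> Sset k t p"
proof -
  have "(\<Sum>i\<le>p. i * (replicate p 0 @ [k]) ! i) = (\<Sum>i<p. i * (replicate p 0 @ [k]) ! i) + p * k"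
    by (simp add: lessThan_Suc_atMost[symmetric] nth_append)
  also have "(\<Sum>i<p. i * (replicate p 0 @ [k]) ! i) = 0"
    by (rule sum.neutral) (auto simp: nth_append)
  finally show ?thesis using assms by (simp add: Sset_def)
qed

lemma mu_le:
  assumes "ks \<in> Sset k t p"
  shows "mu \<gamma> p k t \<le> (\<Prod>e\<le>p. \<gamma> e ^ (ks ! e))"
  unfolding mu_def using assms Sset_finite by (intro Min_le) auto

lemma mu_attained:
  "\<exists>ks\<in>Sset k t p. mu \<gamma> p k t = (\<Prod>e\<le>p. \<gamma> e ^ (ks ! e))"
proof -
  have "mu \<gamma> p k t \<in> (\<lambda>ks. \<Prod>e\<le>p. \<gamma> e ^ (ks ! e)) ` Sset k t p"
  proof -
    have "Sset k t p \<noteq> {}" using Sset_ne by blast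
    then show ?thesis unfolding mu_def using Sset_finite by (intro Min_in) auto
  qed
  then show ?thesis by auto
qed

lemma mu_ge1:
  assumes "\<And>e. e \<le> p \<Longrightarrow> \<gamma> e \<ge> 1"
  shows "mu \<gamma> p k t \<ge> 1"
proof -
  obtain ks where "ks \<in> Sset k t p" "mu \<gamma> p k t = (\<Prod>e\<le>p. \<gamma> e ^ (ks ! e))" using mu_attained by blast
  moreover have "(\<Prod>e\<le>p. \<gamma> e ^ (ks ! e)) \<ge> 1"
    by (rule prod_ge_1) (use assms in auto)
  ultimately show ?thesis by simp
qed

lemma mu_top:
  assumes "p * k \<le> t + p" "\<gamma> p = 1"
  shows "mu \<gamma> p k t \<le> 1"
proof -
  have "mu \<gamma> p k t \<le> (\<Prod>e\<le>p. \<gamma> e ^ ((replicate p 0 @ [k]) ! e))"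
    by (rule mu_le[OF Sset_top[OF assms(1)]])
  also have "(\<Prod>e\<le>p. \<gamma> e ^ ((replicate p 0 @ [k]) ! e)) = 1"
    by (rule prod.neutral) (use assms(2) in \<open>auto simp: nth_append\<close>)
  finally show ?thesis .
qed

lemma mu_step:
  assumes "e \<le> p" "e \<le> t"
  shows "mu \<gamma> p (Suc k) t \<le> \<gamma> e * mu \<gamma> p k (t - e)"
proof -
  obtain ks where ks: "ks \<in> Sset k (t - e) p" and eq: "mu \<gamma> p k (t - e) = (\<Prod>i\<le>p. \<gamma> i ^ (ks ! i))"
    using mu_attained by blast
  have len: "length ks = p + 1" using ks by (simp add: Sset_def)
  define ks' where "ks' = ks[e := ks ! e + 1]"
  have nth': "ks' ! i = ks ! i + (if i = e then 1 else 0)" if "i \<le> p" for i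
    using that len assms by (auto simp: ks'_def nth_list_update)
  have "sum_list ks' = sum_list ks + (ks ! e + 1) - ks ! e"
    unfolding ks'_def using len assms by (intro sum_list_update) simp
  then have sl: "sum_list ks' = Suc k" using ks by (simp add: Sset_def)
  have "(\<Sum>i\<le>p. i * ks' ! i) = (\<Sum>i\<le>p. i * ks ! i + (if i = e then e else 0))"
    by (rule sum.cong) (auto simp: nth')
  also have "\<dots> = (\<Sum>i\<le>p. i * ks ! i) + e"
    using assms by (simp add: sum.distrib)
  moreover have w0: "(\<Sum>i\<le>p. i * ks ! i) \<le> t - e + p" using ks unfolding Sset_def by blast
  ultimately have ws: "(\<Sum>i\<le>p. i * ks' ! i) \<le> t + p" using assms by linarith
  have mem: "ks' \<in> Sset (Suc k) t p" using sl ws len by (simp add: Sset_def ks'_def)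
  have "(\<Prod>i\<le>p. \<gamma> i ^ (ks' ! i)) = (\<Prod>i\<le>p. \<gamma> i ^ (ks ! i) * (if i = e then \<gamma> e else 1))"
    by (rule prod.cong) (auto simp: nth')
  also have "\<dots> = (\<Prod>i\<le>p. \<gamma> i ^ (ks ! i)) * \<gamma> e"
    using assms by (simp add: prod.distrib)
  finally have "mu \<gamma> p (Suc k) t \<le> (\<Prod>i\<le>p. \<gamma> i ^ (ks ! i)) * \<gamma> e"
    using mu_le[OF mem, of \<gamma>] by simp
  then show ?thesis using eq by (simp add: mult.commute)
qed

lemma main_ind:
  fixes \<delta> p :: nat and \<epsilon> :: real and \<gamma> :: "nat \<Rightarrow> real" and A :: nat
  assumes p0: "0 < p" and pd: "p < \<delta>" and ep: "\<epsilon> > 0"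
    and \<gamma>_def: "\<And>e. e < p \<Longrightarrow> \<gamma> e = (1 - \<epsilon>) * real (\<delta> choose p) / real ((\<delta> - p + e) choose e)"
    and \<gamma>_gt: "\<And>e. e < p \<Longrightarrow> \<gamma> e > 1"
    and \<gamma>_p: "\<gamma> p = 1"
    and A_def: "A = nat \<lceil>real (\<delta> choose p) / \<epsilon>\<rceil>"
  shows "t \<le> \<delta> * k \<Longrightarrow> \<lfloor>real A * mu \<gamma> p k t\<rfloor> \<le> int (Mmax (A + \<delta> * k) t)"
proof -
  have g1: "\<And>e. e \<le> p \<Longrightarrow> \<gamma> e \<ge> 1"
    using \<gamma>_gt \<gamma>_p by (metis le_less less_imp_le order.refl)
  define C where "C = \<delta> choose p"
  have Cpos: "real C > 0" using pd by (simp add: C_def)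
  have AC: "real A * \<epsilon> \<ge> real C"
  proof -
    have "real A \<ge> real C / \<epsilon>" unfolding A_def C_def by linarith
    then show ?thesis using ep by (simp add: field_simps)
  qed
  have top: "\<lfloor>real A * mu \<gamma> p k t\<rfloor> \<le> int (Mmax (A + \<delta> * k) t)"
    if "p * k \<le> t + p" "t \<le> \<delta> * k" for k t
  proof -
    have "mu \<gamma> p k t \<le> 1" by (rule mu_top) (use \<gamma>_p that in auto)
    then have "real A * mu \<gamma> p k t \<le> real A" by (simp add: mult_left_le)
    then have "\<lfloor>real A * mu \<gamma> p k t\<rfloor> \<le> int A" by linarith
    also have "int A \<le> int (Mmax (A + \<delta> * k) t)" using Mmax_simple[of t "A + \<delta> * k"] that by simp
    finally show ?thesis .
  qed
  have "\<forall>t. t \<le> \<delta> * k \<longrightarrow> \<lfloor>real A * mu \<gamma> p k t\<rfloor> \<le> int (Mmax (A + \<delta> * k) t)"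
  proof (induction k)
    case 0
    show ?case using top[of 0] by simp
  next
    case (Suc k)
    show ?case
    proof (intro allI impI)
      fix t assume t: "t \<le> \<delta> * Suc k"
      show "\<lfloor>real A * mu \<gamma> p (Suc k) t\<rfloor> \<le> int (Mmax (A + \<delta> * Suc k) t)"
      proof (cases "p * Suc k \<le> t + p")
        case True then show ?thesis using top t by blast
      next
        case False
        then have tk: "t < p * k" by simp
        have "p * k \<le> \<delta> * k" using pd by simp
        then have tdk: "t \<le> \<delta> * k" using tk by linarith
        define \<mu> where "\<mu> = mu \<gamma> p (Suc k) t"
        define N where "N = nat \<lfloor>real A * \<mu>\<rfloor>"
        have mu1: "\<mu> \<ge> 1" unfolding \<mu>_def by (rule mu_ge1) (use g1 in auto)
        have Nfl: "\<lfloor>real A * \<mu>\<rfloor> = int N" unfolding N_def using mu1 by simp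
        have NA: "real N \<le> real A * \<mu>"
        proof -
          have "real N = real_of_int \<lfloor>real A * \<mu>\<rfloor>" using Nfl by simp
          then show ?thesis using of_int_floor_le[of "real A * \<mu>"] by linarith
        qed
        have "N \<le> Mmax (\<delta> + (A + \<delta> * k)) t"
        proof (rule block)
          show "p \<le> \<delta>" using pd by simp
          fix e assume e: "e \<le> p" "e \<le> t"
          define \<mu>' where "\<mu>' = mu \<gamma> p k (t - e)"
          have mu1': "\<mu>' \<ge> 1" unfolding \<mu>'_def by (rule mu_ge1) (use g1 in auto)
          have st: "\<mu> \<le> \<gamma> e * \<mu>'" unfolding \<mu>_def \<mu>'_def by (rule mu_step[OF e])
          have IH: "\<lfloor>real A * \<mu>'\<rfloor> \<le> int (Mmax (A + \<delta> * k) (t - e))"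
            using Suc.IH tdk unfolding \<mu>'_def by simp
          have key: "real (min N (((\<delta> - p + e) choose e) * (N div (\<delta> choose p) + 1))) \<le> real A * \<mu>'"
          proof (cases "e = p")
            case True
            have "real (min N (((\<delta> - p + e) choose e) * (N div (\<delta> choose p) + 1))) \<le> real N" by simp
            also have "\<dots> \<le> real A * \<mu>" by (rule NA)
            also have "\<dots> \<le> real A * (\<gamma> e * \<mu>')" using st by (simp add: mult_left_mono)
            finally show ?thesis using True \<gamma>_p by simp
          next
            case False
            then have el: "e < p" using e by simp
            define ce where "ce = real ((\<delta> - p + e) choose e)"
            have cepos: "ce > 0" unfolding ce_def by simp
            have ge: "\<gamma> e = (1 - \<epsilon>) * real C / ce" using \<gamma>_def[OF el] by (simp add: ce_def C_def)
            have "1 < (1 - \<epsilon>) * real C / ce" using \<gamma>_gt[OF el] ge by simp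
            then have ceC: "ce < (1 - \<epsilon>) * real C" using cepos by (simp add: field_simps)
            have "real (min N (((\<delta> - p + e) choose e) * (N div (\<delta> choose p) + 1)))
                \<le> ce * (real (N div C) + 1)"
            proof -
              have "min N (((\<delta> - p + e) choose e) * (N div (\<delta> choose p) + 1))
                  \<le> ((\<delta> - p + e) choose e) * (N div (\<delta> choose p) + 1)" by simp
              then have "real (min N (((\<delta> - p + e) choose e) * (N div (\<delta> choose p) + 1)))
                  \<le> real (((\<delta> - p + e) choose e) * (N div (\<delta> choose p) + 1))" by linarith
              also have "\<dots> = ce * (real (N div C) + 1)" by (simp add: ce_def C_def algebra_simps)
              finally show ?thesis .
            qed
            also have "\<dots> \<le> ce * (real N / real C + 1)"
              using cepos of_nat_div_le_of_nat[of N C] by (intro mult_left_mono) auto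
            also have "\<dots> \<le> ce * (real A * (\<gamma> e * \<mu>') / real C + 1)"
            proof -
              have "real A * \<mu> \<le> real A * (\<gamma> e * \<mu>')" using st by (simp add: mult_left_mono)
              then have "real N \<le> real A * (\<gamma> e * \<mu>')" using NA by linarith
              then show ?thesis using cepos Cpos by (intro mult_left_mono) (auto simp: divide_right_mono)
            qed
            also have "\<dots> = real A * (1 - \<epsilon>) * \<mu>' + ce"
              unfolding ge using cepos Cpos by (simp add: field_simps)
            also have "\<dots> \<le> real A * \<mu>'"
            proof -
              have "(1 - \<epsilon>) * real C \<le> real C" using ep Cpos by (simp add: algebra_simps)
              then have "ce \<le> real C" using ceC by linarith
              also have "\<dots> \<le> real A * \<epsilon>" by (rule AC)
              also have "\<dots> \<le> real A * \<epsilon> * \<mu>'"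
                using mult_left_mono[of 1 "\<mu>'" "real A * \<epsilon>"] mu1' AC Cpos by simp
              finally show ?thesis by (simp add: algebra_simps)
            qed
            finally show ?thesis .
          qed
          have "int (min N (((\<delta> - p + e) choose e) * (N div (\<delta> choose p) + 1))) \<le> \<lfloor>real A * \<mu>'\<rfloor>"
            using key by (simp add: le_floor_iff)
          then show "min N (((\<delta> - p + e) choose e) * (N div (\<delta> choose p) + 1)) \<le> Mmax (A + \<delta> * k) (t - e)"
            using IH by linarith
        qed
        moreover have "\<delta> + (A + \<delta> * k) = A + \<delta> * Suc k" by simp
        ultimately show ?thesis using Nfl unfolding \<mu>_def by simp
      qed
    qed
  qed
  then show "t \<le> \<delta> * k \<Longrightarrow> \<lfloor>real A * mu \<gamma> p k t\<rfloor> \<le> int (Mmax (A + \<delta> * k) t)" by blast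
qed

lemma binom_pair:
  "((a + x) choose x) * ((b + y) choose y) \<le> (a + b + x + y) choose (x + y)"
proof -
  have "((a + x) choose x) * ((b + y) choose ((x + y) - x))
      \<le> (\<Sum>k\<le>x + y. ((a + x) choose k) * ((b + y) choose ((x + y) - k)))"
    by (rule member_le_sum) auto
  also have "\<dots> = ((a + x) + (b + y)) choose (x + y)" by (rule vandermonde)
  finally show ?thesis by (simp add: add_ac)
qed

lemma binom_pow:
  "((a + e) choose e) ^ j \<le> (a * j + e * j) choose (e * j)"
proof (induction j)
  case 0 then show ?case by simp
next
  case (Suc j)
  have "((a + e) choose e) ^ Suc j = ((a + e) choose e) * ((a + e) choose e) ^ j" by simp
  also have "\<dots> \<le> ((a + e) choose e) * ((a * j + e * j) choose (e * j))"
    using Suc.IH by (rule mult_left_mono) simp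
  also have "\<dots> \<le> (a + a * j + e + e * j) choose (e + e * j)"
    using binom_pair[of a e "a * j" "e * j"] by simp
  also have "a + a * j + e + e * j = a * Suc j + e * Suc j" by simp
  also have "e + e * j = e * Suc j" by simp
  finally show ?case .
qed

lemma binom_prod:
  "(\<Prod>e\<le>q. ((a + e) choose e) ^ f e)
     \<le> (a * (\<Sum>e\<le>q. f e) + (\<Sum>e\<le>q. e * f e)) choose (\<Sum>e\<le>q. e * f e)"
proof (induction q)
  case 0 then show ?case by simp
next
  case (Suc q)
  let ?S = "\<Sum>e\<le>q. f e" and ?E = "\<Sum>e\<le>q. e * f e" and ?j = "f (Suc q)"
  have "(\<Prod>e\<le>Suc q. ((a + e) choose e) ^ f e)
      = (\<Prod>e\<le>q. ((a + e) choose e) ^ f e) * ((a + Suc q) choose Suc q) ^ ?j" by simp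
  also have "\<dots> \<le> ((a * ?S + ?E) choose ?E) * ((a * ?j + Suc q * ?j) choose (Suc q * ?j))"
    by (rule mult_mono[OF Suc.IH binom_pow]) simp_all
  also have "\<dots> \<le> (a * ?S + a * ?j + ?E + Suc q * ?j) choose (?E + Suc q * ?j)"
    using binom_pair[of "a * ?S" ?E "a * ?j" "Suc q * ?j"] by simp
  also have "a * ?S + a * ?j + ?E + Suc q * ?j = a * (\<Sum>e\<le>Suc q. f e) + (\<Sum>e\<le>Suc q. e * f e)"
    by (simp add: algebra_simps)
  also have "?E + Suc q * ?j = (\<Sum>e\<le>Suc q. e * f e)" by simp
  finally show ?case .
qed

lemma binom_mono2:
  assumes "E \<le> F"
  shows "(c + E) choose E \<le> (c + F) choose F"
proof -
  have "((c + E) choose E) * ((0 + (F - E)) choose (F - E)) \<le> (c + 0 + E + (F - E)) choose (E + (F - E))"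
    by (rule binom_pair)
  then show ?thesis using assms by simp
qed

theorem lemma2:
  fixes \<delta> p :: nat and \<epsilon> :: real and \<gamma> :: "nat \<Rightarrow> real" and A :: nat
  assumes "0 < p" and "p < \<delta>" and "\<epsilon> > 0"
    and \<gamma>_def: "\<And>e. e < p \<Longrightarrow> \<gamma> e = (1 - \<epsilon>) * real (\<delta> choose p) / real ((\<delta> - p + e) choose e)"
    and \<gamma>_gt: "\<And>e. e < p \<Longrightarrow> \<gamma> e > 1"
    and \<gamma>_p: "\<gamma> p = 1"
    and A_def: "A = nat \<lceil>real (\<delta> choose p) / \<epsilon>\<rceil>"
  shows "\<forall>t k :: nat. t \<le> \<delta> * k \<longrightarrow>
      int (Mmax (A + \<delta> * k) t)
        \<ge> \<lfloor>real A * Min ((\<lambda>ks. \<Prod>e\<le>p. \<gamma> e ^ (ks ! e)) ` Sset k t p)\<rfloor>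
      \<and> real (Mmax (A + \<delta> * k) t)
        \<ge> real A * ((1 - \<epsilon>) ^ k * real (\<delta> choose p) ^ k)
            / real ((\<delta> * k - p * k + t + p) choose (t + p)) - 1"
proof (intro allI impI)
  fix t k :: nat assume tk: "t \<le> \<delta> * k"
  have first: "\<lfloor>real A * mu \<gamma> p k t\<rfloor> \<le> int (Mmax (A + \<delta> * k) t)"
    by (rule main_ind[OF assms tk])
  define C where "C = \<delta> choose p"
  define g where "g = (1 - \<epsilon>) * real C"
  define B where "B = (\<delta> * k - p * k + t + p) choose (t + p)"
  define ce where "ce e = (\<delta> - p + e) choose e" for e
  have cepos: "ce e > 0" for e by (simp add: ce_def)
  have cep: "ce p = C" using assms(2) by (simp add: ce_def C_def)
  have gpos: "g > 1" using \<gamma>_gt[of 0] \<gamma>_def[of 0] assms(1) by (simp add: g_def C_def)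
  have gam: "\<gamma> e \<ge> g / real (ce e)" if "e \<le> p" for e
  proof (cases "e = p")
    case True
    have Cpos: "real C > 0" using assms(2) by (simp add: C_def)
    have "g / real (ce e) = 1 - \<epsilon>" using True cep Cpos by (simp add: g_def)
    then show ?thesis using True \<gamma>_p assms(3) by simp
  next
    case False
    then have "e < p" using that by simp
    then show ?thesis using \<gamma>_def by (simp add: g_def ce_def C_def)
  qed
  obtain ks where ks: "ks \<in> Sset k t p" and mueq: "mu \<gamma> p k t = (\<Prod>e\<le>p. \<gamma> e ^ (ks ! e))"
    using mu_attained by blast
  have len: "length ks = p + 1" and sl: "sum_list ks = k" and ws: "(\<Sum>i\<le>p. i * ks ! i) \<le> t + p"
    using ks by (auto simp: Sset_def)
  have sumk: "(\<Sum>e\<le>p. ks ! e) = k"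
  proof -
    have "sum_list ks = (\<Sum>i = 0..<length ks. ks ! i)" by (rule sum_list_sum_nth)
    also have "{0..<length ks} = {..p}" using len by auto
    finally show ?thesis using sl by simp
  qed
  have Bnat: "(\<Prod>e\<le>p. ce e ^ (ks ! e)) \<le> B"
  proof -
    have "(\<Prod>e\<le>p. ce e ^ (ks ! e))
       \<le> ((\<delta> - p) * (\<Sum>e\<le>p. ks ! e) + (\<Sum>e\<le>p. e * ks ! e)) choose (\<Sum>e\<le>p. e * ks ! e)"
      unfolding ce_def by (rule binom_prod)
    also have "\<dots> \<le> ((\<delta> - p) * k + (t + p)) choose (t + p)"
      unfolding sumk by (rule binom_mono2[OF ws])
    also have "(\<delta> - p) * k + (t + p) = \<delta> * k - p * k + t + p" by (simp add: diff_mult_distrib)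
    finally show ?thesis by (simp add: B_def)
  qed
  have Bpos: "real B > 0" by (simp add: B_def)
  have Ppos: "real (\<Prod>e\<le>p. ce e ^ (ks ! e)) > 0" using cepos by (simp add: prod_pos)
  have "g ^ k / real B \<le> g ^ k / real (\<Prod>e\<le>p. ce e ^ (ks ! e))"
  proof -
    have RB: "real (\<Prod>e\<le>p. ce e ^ (ks ! e)) \<le> real B" using Bnat by (simp only: of_nat_le_iff)
    have c0: "0 \<le> g ^ k" using gpos by simp
    have c1: "0 < real B * real (\<Prod>e\<le>p. ce e ^ (ks ! e))" by (rule mult_pos_pos[OF Bpos Ppos])
    show ?thesis by (rule divide_left_mono[OF RB c0 c1])
  qed
  also have "g ^ k / real (\<Prod>e\<le>p. ce e ^ (ks ! e)) = (\<Prod>e\<le>p. (g / real (ce e)) ^ (ks ! e))"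
    by (simp add: power_divide prod_dividef power_sum[symmetric] sumk)
  also have "\<dots> \<le> (\<Prod>e\<le>p. \<gamma> e ^ (ks ! e))"
    by (rule prod_mono) (use gam gpos cepos in \<open>auto intro: power_mono\<close>)
  finally have mub: "mu \<gamma> p k t \<ge> g ^ k / real B" using mueq by simp
  have "real A * ((1 - \<epsilon>) ^ k * real (\<delta> choose p) ^ k)
            / real ((\<delta> * k - p * k + t + p) choose (t + p)) = real A * (g ^ k / real B)"
    by (simp add: g_def C_def B_def power_mult_distrib)
  also have "\<dots> \<le> real A * mu \<gamma> p k t" using mult_left_mono[OF mub, of "real A"] by simp
  finally have s2: "real A * ((1 - \<epsilon>) ^ k * real (\<delta> choose p) ^ k)
            / real ((\<delta> * k - p * k + t + p) choose (t + p)) - 1 \<le> real (Mmax (A + \<delta> * k) t)"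
    using first by linarith
  show "int (Mmax (A + \<delta> * k) t)
        \<ge> \<lfloor>real A * Min ((\<lambda>ks. \<Prod>e\<le>p. \<gamma> e ^ (ks ! e)) ` Sset k t p)\<rfloor>
      \<and> real (Mmax (A + \<delta> * k) t)
        \<ge> real A * ((1 - \<epsilon>) ^ k * real (\<delta> choose p) ^ k)
            / real ((\<delta> * k - p * k + t + p) choose (t + p)) - 1"
    using first s2 by (simp add: mu_def)
qed

end
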